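(* Let $(\lambda_i)_{i\ge1}$ be a sequence with $0\le\lambda_i<\lambda_{\max}$ for all $i$ and $\lim_{n\to\infty}\frac{\lambda_1+\dots+\lambda_n}{n}=\bar\lambda$. For each $n$ let $\mathbf{v}^{(n)}\sim\mathcal{CN}(\mathbf{0},\mathrm{diag}(\lambda_1,\dots,\lambda_n))$, and let $\omega_n$ be an eigenvalue of the rank-one matrix $\mathbf{v}^{(n)}(\mathbf{v}^{(n)})^H$ selected uniformly at random among its $n$ eigenvalues (counted with multiplicity), independently of $\mathbf{v}^{(n)}$. Let $\kappa_j(\omega_n)$ denote the $j$-th cumulant of $\omega_n$ and $\mathcal{R}_{\omega_n}(s)=\sum_{k\ge0}\kappa_{k+1}(\omega_n)s^k$ its $\mathcal{R}$-transform (as a formal power series). Then for every $k\ge0$, $$\lim_{n\to\infty}\frac{\kappa_{k+1}(\omega_n)}{n^k}=\bar\lambda^{k+1},$$ i.e. $\mathcal{R}_{\omega_n}(s/n)$ converges coefficientwise to $\sum_{k\ge0}\bar\lambda^{k+1}s^k=\frac{\bar\lambda}{1-s\bar\lambda}$.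
   Context: The $j$-th cumulant of a random variable $X$ with all moments finite is $\kappa_j=\frac{d^j}{ds^j}\log\mathbb{E}[e^{sX}]\big|_{s=0}$ (equivalently defined via the moment–cumulant relations). *)

theory Defs
  imports "HOL-Probability.Probability" "Jordan_Normal_Form.Char_Poly"
    "HOL-Computational_Algebra.Fundamental_Theorem_Algebra"
begin

text \<open>Cumulants from the moment sequence m (m k = E[X^k]) via the moment-cumulant relation
  kappa_n = m_n - sum_{j=1}^{n-1} binom(n-1, j-1) kappa_j m_{n-j}.\<close>
fun cumulant :: "(nat \<Rightarrow> real) \<Rightarrow> nat \<Rightarrow> real" where
  "cumulant m n = (if n = 0 then 0 else
      m n - (\<Sum>j\<in>{1..<n}. real ((n - 1) choose (j - 1)) * cumulant m j * m (n - j)))"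

declare cumulant.simps[simp del]

definition moments :: "'a measure \<Rightarrow> ('a \<Rightarrow> real) \<Rightarrow> nat \<Rightarrow> real" where
  "moments M X k = integral\<^sup>L M (\<lambda>x. X x ^ k)"

text \<open>The n-vector v (components v 0, ..., v (n-1)) is circularly-symmetric complex Gaussian
  CN(0, diag(lam 0, ..., lam (n-1))), defined via its characteristic function
  E[exp(i Re(w^H v))] = exp(-w^H Sigma w / 4).\<close>
definition complex_gaussian_diag ::
  "'a measure \<Rightarrow> nat \<Rightarrow> (nat \<Rightarrow> real) \<Rightarrow> ('a \<Rightarrow> nat \<Rightarrow> complex) \<Rightarrow> bool" where
  "complex_gaussian_diag M n lam v \<longleftrightarrow>
     (\<forall>i<n. (\<lambda>x. v x i) \<in> borel_measurable M) \<and>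
     (\<forall>w :: nat \<Rightarrow> complex.
        integral\<^sup>L M (\<lambda>x. exp (\<i> * complex_of_real (Re (\<Sum>k<n. cnj (w k) * v x k))))
        = exp (- complex_of_real ((\<Sum>k<n. lam k * (cmod (w k))\<^sup>2) / 4)))"

definition rank_one_mat :: "nat \<Rightarrow> (nat \<Rightarrow> complex) \<Rightarrow> complex mat" where
  "rank_one_mat n v = mat n n (\<lambda>(i, j). v i * cnj (v j))"

text \<open>The eigenvalues of v v^H counted with multiplicity (roots of the characteristic polynomial;
  they are real since the matrix is Hermitian), listed in increasing order.\<close>
definition eigenvalue_list :: "nat \<Rightarrow> (nat \<Rightarrow> complex) \<Rightarrow> real list" where
  "eigenvalue_list n v =
     sorted_list_of_multiset (image_mset Re (proots (char_poly (rank_one_mat n v))))"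

end

theory Submission
  imports Defs "Jordan_Normal_Form.Schur_Decomposition"
begin



definition mtrace :: "'a::comm_ring_1 mat \<Rightarrow> 'a" where
  "mtrace A = (\<Sum>i<dim_row A. A $$ (i,i))"

lemma mtrace_comm:
  fixes A B :: "'a::comm_ring_1 mat"
  assumes "A \<in> carrier_mat n m" "B \<in> carrier_mat m n"
  shows "mtrace (A * B) = mtrace (B * A)"
proof -
  have "mtrace (A * B) = (\<Sum>i<n. \<Sum>k<m. A $$ (i,k) * B $$ (k,i))"
    using assms unfolding mtrace_def
    by (auto simp: scalar_prod_def intro!: sum.cong simp: lessThan_atLeast0)
  also have "\<dots> = (\<Sum>k<m. \<Sum>i<n. B $$ (k,i) * A $$ (i,k))"
    by (subst sum.swap) (simp add: mult.commute)
  also have "\<dots> = mtrace (B * A)"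
    using assms unfolding mtrace_def
    by (auto simp: scalar_prod_def intro!: sum.cong simp: lessThan_atLeast0)
  finally show ?thesis .
qed

lemma upper_tri_sq_diag:
  fixes B :: "'a::comm_ring_1 mat"
  assumes "B \<in> carrier_mat n n" "upper_triangular B" "i < n"
  shows "(B * B) $$ (i,i) = B $$ (i,i) ^ 2"
proof -
  have "(B * B) $$ (i,i) = (\<Sum>k\<in>{0..<n}. B $$ (i,k) * B $$ (k,i))"
    using assms by (auto simp: scalar_prod_def)
  also have "\<dots> = (\<Sum>k\<in>{i}. B $$ (i,k) * B $$ (k,i))"
  proof (rule sum.mono_neutral_right)
    show "\<forall>k\<in>{0..<n} - {i}. B $$ (i, k) * B $$ (k, i) = 0"
    proof
      fix k assume k: "k \<in> {0..<n} - {i}"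
      show "B $$ (i, k) * B $$ (k, i) = 0"
      proof (cases "k < i")
        case True then show ?thesis using assms by (simp add: upper_triangular_def)
      next
        case False then have "i < k" using k by auto
        then show ?thesis using assms k by (simp add: upper_triangular_def)
      qed
    qed
  qed (use assms in auto)
  finally show ?thesis by (simp add: power2_eq_square)
qed

definition sqn :: "nat \<Rightarrow> (nat \<Rightarrow> complex) \<Rightarrow> real" where
  "sqn n v = (\<Sum>k<n. (cmod (v k))\<^sup>2)"

lemma rank_one_carrier: "rank_one_mat n v \<in> carrier_mat n n"
  by (simp add: rank_one_mat_def)

lemma rank_one_sq: "rank_one_mat n v * rank_one_mat n v = complex_of_real (sqn n v) \<cdot>\<^sub>m rank_one_mat n v"
proof (rule eq_matI)
  fix i j assume ij: "i < dim_row (complex_of_real (sqn n v) \<cdot>\<^sub>m rank_one_mat n v)"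
     "j < dim_col (complex_of_real (sqn n v) \<cdot>\<^sub>m rank_one_mat n v)"
  then have i: "i < n" and j: "j < n" by (auto simp: rank_one_mat_def)
  have "(rank_one_mat n v * rank_one_mat n v) $$ (i,j) = (\<Sum>k\<in>{0..<n}. v i * cnj (v k) * (v k * cnj (v j)))"
    using i j by (auto simp: rank_one_mat_def scalar_prod_def)
  also have "\<dots> = v i * cnj (v j) * (\<Sum>k\<in>{0..<n}. v k * cnj (v k))"
    by (simp add: sum_distrib_left mult_ac)
  also have "(\<Sum>k\<in>{0..<n}. v k * cnj (v k)) = complex_of_real (sqn n v)"
    unfolding sqn_def lessThan_atLeast0 of_real_sum by (rule sum.cong) (simp_all add: complex_norm_square[symmetric])
  finally show "(rank_one_mat n v * rank_one_mat n v) $$ (i,j) = (complex_of_real (sqn n v) \<cdot>\<^sub>m rank_one_mat n v) $$ (i,j)"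
    using i j by (simp add: rank_one_mat_def mult_ac)
qed (auto simp: rank_one_mat_def)

lemma rank_one_trace: "mtrace (rank_one_mat n v) = complex_of_real (sqn n v)"
  unfolding mtrace_def sqn_def of_real_sum by (rule sum.cong) (simp_all add: rank_one_mat_def complex_norm_square[symmetric])

lemma proots_lin_prod: "proots (\<Prod>a\<leftarrow>as. [:- a, 1:]) = mset (as :: complex list)"
proof (induction as)
  case (Cons a as)
  have nz: "(\<Prod>a\<leftarrow>as. [:- a, 1:]) \<noteq> 0"
    by (subst prod_list_zero_iff) auto
  have "proots (\<Prod>a\<leftarrow>a # as. [:- a, 1:]) = proots ([:- a, 1:] * (\<Prod>a\<leftarrow>as. [:- a, 1:]))"
    by simp
  also have "\<dots> = proots [:- a, 1:] + proots (\<Prod>a\<leftarrow>as. [:- a, 1:])"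
    by (rule proots_mult) (use nz in auto)
  finally show ?case using Cons by (simp add: proots_linear_factor)
qed simp

lemma count_list_len_filter: "count (mset xs) x = length (filter (\<lambda>d. d = x) xs)"
  by (induction xs) auto

lemma mset_two_vals:
  fixes ds :: "complex list"
  assumes "\<forall>d\<in>set ds. d = 0 \<or> d = s" "sum_list ds = s" "length ds = n" "n \<ge> 1"
  shows "mset ds = replicate_mset (n - 1) 0 + {#s#}"
proof (cases "s = 0")
  case True
  then have "ds = replicate n 0" using assms by (metis in_set_replicate length_replicate list_eq_iff_nth_eq nth_mem)
  then show ?thesis using True assms(4) by (cases n) auto
next
  case False
  have sl: "sum_list ds = of_nat (length (filter (\<lambda>d. d = s) ds)) * s"
    using assms(1) by (induction ds) (auto simp: algebra_simps)
  have c1: "length (filter (\<lambda>d. d = s) ds) = 1"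
    using sl assms(2) False by (metis mult_cancel_right1 of_nat_eq_1_iff)
  have fl: "filter (\<lambda>d. \<not> d = s) ds = filter (\<lambda>d. d = 0) ds"
    using assms(1) False by (induction ds) auto
  have c0: "length (filter (\<lambda>d. d = 0) ds) = n - 1"
    using sum_length_filter_compl[of "\<lambda>d. d = s" ds] c1 fl assms(3) by simp
  show ?thesis
  proof (rule multiset_eqI)
    fix x
    show "count (mset ds) x = count (replicate_mset (n - 1) 0 + {#s#}) x"
    proof -
      consider "x = s" | "x = 0" | "x \<noteq> s" "x \<noteq> 0" by blast
      then show ?thesis
      proof cases
        case 1
        have "filter ((=) x) ds = filter (\<lambda>d. d = s) ds" using 1 by (intro filter_cong) auto
        then show ?thesis using c1 False 1 by (simp add: count_list_len_filter)
      next
        case 2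
        have "filter ((=) x) ds = filter (\<lambda>d. d = 0) ds" using 2 by (intro filter_cong) auto
        then show ?thesis using c0 False 2 by (simp add: count_list_len_filter)
      next
        case 3
        have "filter (\<lambda>d. d = x) ds = []" using assms(1) 3 by (auto simp: filter_empty_conv)
        then show ?thesis using 3 by (simp add: count_list_len_filter)
      qed
    qed
  qed
qed

lemma cancel_left_mat:
  fixes P Q X :: "'a::comm_ring_1 mat"
  assumes "P \<in> carrier_mat n n" "Q \<in> carrier_mat n n" "X \<in> carrier_mat n m" "Q * P = 1\<^sub>m n"
  shows "Q * (P * X) = X"
proof -
  have "Q * (P * X) = (Q * P) * X" by (rule assoc_mult_mat[symmetric]) (use assms in auto)
  also have "\<dots> = 1\<^sub>m n * X" using assms(4) by simp
  also have "\<dots> = X" using assms(3) by (rule left_mult_one_mat)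
  finally show ?thesis .
qed

lemma sqn_nonneg: "sqn n v \<ge> 0"
  by (simp add: sqn_def sum_nonneg)

lemma eigenvalue_list_rank_one:
  assumes n: "n \<ge> 1"
  shows "eigenvalue_list n v = replicate (n - 1) 0 @ [sqn n v]"
proof -
  define A where "A = rank_one_mat n v"
  define S where "S = complex_of_real (sqn n v)"
  have A: "A \<in> carrier_mat n n" by (simp add: A_def rank_one_carrier)
  obtain es where es: "char_poly A = (\<Prod>a\<leftarrow>es. [:- a, 1:])"
    using char_poly_factorized[OF A] by blast
  obtain B where B: "B \<in> carrier_mat n n" "upper_triangular B" "similar_mat A B"
    using schur_decomposition_exists[OF A es] by blast
  obtain P Q where PQ: "P \<in> carrier_mat n n" "Q \<in> carrier_mat n n" "P * Q = 1\<^sub>m n" "Q * P = 1\<^sub>m n" "A = P * B * Q"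
    using B(3) A unfolding similar_mat_def similar_mat_wit_def Let_def by auto
  have cpB: "char_poly A = (\<Prod>a\<leftarrow>diag_mat B. [:- a, 1:])"
    using char_poly_similar[OF B(3)] char_poly_upper_triangular[OF B(1,2)] by simp
  have BQAP: "B = Q * A * P"
  proof -
    have "Q * A * P = Q * (P * B * Q) * P" using PQ by simp
    also have "\<dots> = B" using PQ B
      by (simp add: assoc_mult_mat[of _ n n _ n _ n] cancel_left_mat[of P n Q _ n])
    finally show ?thesis by simp
  qed
  have AA: "A * A = S \<cdot>\<^sub>m A" unfolding A_def S_def by (rule rank_one_sq)
  have BB: "B * B = S \<cdot>\<^sub>m B"
  proof -
    have "B * B = Q * A * P * (Q * A * P)" using BQAP by simp
    also have "\<dots> = Q * (A * A) * P"
      using PQ(1-4) A by (simp add: assoc_mult_mat[of _ n n _ n _ n] cancel_left_mat[of Q n P _ n])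
    also have "\<dots> = S \<cdot>\<^sub>m (Q * A * P)"
      using PQ(1-4) A by (simp add: AA mult_smult_distrib[of _ n n _ n] mult_smult_assoc_mat[of _ n n _ n])
    finally show ?thesis using BQAP by simp
  qed
  have trB: "mtrace B = S"
  proof -
    have "mtrace B = mtrace (Q * (A * P))"
      using BQAP PQ A by (simp add: assoc_mult_mat[of _ n n _ n _ n])
    also have "\<dots> = mtrace ((A * P) * Q)"
      using PQ A by (intro mtrace_comm[of _ n n]) auto
    also have "\<dots> = mtrace A"
      using PQ A by (simp add: assoc_mult_mat[of _ n n _ n _ n])
    finally show ?thesis unfolding S_def A_def by (simp add: rank_one_trace)
  qed
  have dvals: "\<forall>d\<in>set (diag_mat B). d = 0 \<or> d = S"
  proof
    fix d assume "d \<in> set (diag_mat B)"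
    then obtain i where i: "i < n" "d = B $$ (i,i)" using B(1) by (auto simp: diag_mat_def)
    have "d ^ 2 = S * d"
      using upper_tri_sq_diag[OF B(1,2) i(1)] BB i B(1) by simp
    then have "d * (d - S) = 0" by (simp add: power2_eq_square algebra_simps)
    then show "d = 0 \<or> d = S" by simp
  qed
  have dsum: "sum_list (diag_mat B) = S"
  proof -
    have "sum_list (diag_mat B) = (\<Sum>i\<in>set [0..<n]. B $$ (i,i))"
      using B(1) by (simp add: diag_mat_def sum_list_distinct_conv_sum_set)
    also have "\<dots> = mtrace B" using B(1) by (simp add: mtrace_def lessThan_atLeast0)
    finally show ?thesis using trB by simp
  qed
  have dlen: "length (diag_mat B) = n" using B(1) by (simp add: diag_mat_def)
  have ms: "proots (char_poly A) = replicate_mset (n - 1) 0 + {#S#}"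
    using cpB proots_lin_prod mset_two_vals[OF dvals dsum dlen n] by simp
  have eq: "image_mset Re (proots (char_poly A)) = mset (replicate (n - 1) 0 @ [sqn n v])"
    unfolding ms S_def by simp
  have so: "sorted (replicate (n - 1) 0 @ [sqn n v])"
    using sqn_nonneg[of n v] by (auto simp: sorted_append)
  have "eigenvalue_list n v = sorted_list_of_multiset (mset (replicate (n - 1) 0 @ [sqn n v]))"
    unfolding eigenvalue_list_def A_def[symmetric] eq ..
  also have "\<dots> = sort (replicate (n - 1) 0 @ [sqn n v])" by (rule sorted_list_of_multiset_mset)
  also have "\<dots> = replicate (n - 1) 0 @ [sqn n v]" using so by (rule sorted_sort_id)
  finally show ?thesis .
qed



fun hh :: "(nat \<Rightarrow> real) \<Rightarrow> nat \<Rightarrow> nat \<Rightarrow> real" where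
  "hh lam 0 j = (if j = 0 then 1 else 0)"
| "hh lam (Suc n) j = (\<Sum>i\<le>j. hh lam n (j - i) * lam n ^ i)"

definition qq :: "(nat \<Rightarrow> real) \<Rightarrow> nat \<Rightarrow> nat \<Rightarrow> real" where
  "qq lam n i = (\<Sum>k<n. lam k ^ i)"

lemma hh_0: "hh lam n 0 = 1"
  by (induction n) auto

lemma hh_Suc_Suc: "hh lam (Suc n) (Suc j) = hh lam n (Suc j) + lam n * hh lam (Suc n) j"
proof -
  have "hh lam (Suc n) (Suc j) = (\<Sum>i\<le>Suc j. hh lam n (Suc j - i) * lam n ^ i)" by (simp only: hh.simps)
  also have "\<dots> = hh lam n (Suc j - 0) * lam n ^ 0 + (\<Sum>i\<le>j. hh lam n (Suc j - Suc i) * lam n ^ Suc i)"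
    by (rule sum.atMost_Suc_shift)
  finally have "hh lam (Suc n) (Suc j) = hh lam n (Suc j) + (\<Sum>i\<le>j. hh lam n (Suc j - Suc i) * lam n ^ Suc i)"
    by simp
  also have "(\<Sum>i\<le>j. hh lam n (Suc j - Suc i) * lam n ^ Suc i) = lam n * hh lam (Suc n) j"
    by (simp add: sum_distrib_left mult_ac)
  finally show ?thesis .
qed

lemma qq_Suc: "qq lam (Suc n) i = qq lam n i + lam n ^ i"
  by (simp add: qq_def)

lemma shift_sum: "(\<Sum>i=1..Suc j. lam n ^ i * hh lam n (Suc j - i)) = lam n * hh lam (Suc n) j"
proof -
  have "(\<Sum>i=1..Suc j. lam n ^ i * hh lam n (Suc j - i)) = (\<Sum>i<Suc j. lam n ^ Suc i * hh lam n (Suc j - Suc i))"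
    by (simp only: One_nat_def sum.atLeast1_atMost_eq)
  also have "\<dots> = lam n * (\<Sum>i\<le>j. hh lam n (j - i) * lam n ^ i)"
    by (simp add: sum_distrib_left mult_ac lessThan_Suc_atMost)
  finally show ?thesis by simp
qed

lemma newton: "real j * hh lam n j = (\<Sum>i=1..j. qq lam n i * hh lam n (j - i))"
proof (induction n arbitrary: j)
  case 0
  then show ?case by (simp add: qq_def)
next
  case (Suc n)
  note IHn = Suc.IH
  let ?x = "lam n"
  show ?case
  proof (induction j)
    case 0 then show ?case by simp
  next
    case (Suc j)
    note IHj = Suc.IH
    have split: "(\<Sum>i=1..Suc j. qq lam (Suc n) i * hh lam (Suc n) (Suc j - i))
      = (\<Sum>i=1..Suc j. qq lam (Suc n) i * hh lam n (Suc j - i))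
        + ?x * (\<Sum>i=1..j. qq lam (Suc n) i * hh lam (Suc n) (j - i))"
    proof -
      have "(\<Sum>i=1..Suc j. qq lam (Suc n) i * hh lam (Suc n) (Suc j - i))
          = (\<Sum>i=1..j. qq lam (Suc n) i * hh lam (Suc n) (Suc j - i)) + qq lam (Suc n) (Suc j) * hh lam (Suc n) 0"
        by (simp add: sum.cl_ivl_Suc)
      also have "(\<Sum>i=1..j. qq lam (Suc n) i * hh lam (Suc n) (Suc j - i))
          = (\<Sum>i=1..j. qq lam (Suc n) i * hh lam n (Suc j - i)) + ?x * (\<Sum>i=1..j. qq lam (Suc n) i * hh lam (Suc n) (j - i))"
      proof -
        have "(\<Sum>i=1..j. qq lam (Suc n) i * hh lam (Suc n) (Suc j - i))
            = (\<Sum>i=1..j. qq lam (Suc n) i * hh lam n (Suc j - i) + ?x * (qq lam (Suc n) i * hh lam (Suc n) (j - i)))"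
        proof (rule sum.cong)
          fix i assume "i \<in> {1..j}"
          then have "Suc j - i = Suc (j - i)" by auto
          then show "qq lam (Suc n) i * hh lam (Suc n) (Suc j - i) = qq lam (Suc n) i * hh lam n (Suc j - i) + ?x * (qq lam (Suc n) i * hh lam (Suc n) (j - i))"
            by (simp only: hh_Suc_Suc) (simp add: algebra_simps)
        qed simp
        then show ?thesis by (simp add: sum.distrib sum_distrib_left)
      qed
      finally show ?thesis by (simp add: sum.cl_ivl_Suc hh_0)
    qed
    have p1: "(\<Sum>i=1..Suc j. qq lam (Suc n) i * hh lam n (Suc j - i))
        = real (Suc j) * hh lam n (Suc j) + ?x * hh lam (Suc n) j"
    proof -
      have "(\<Sum>i=1..Suc j. qq lam (Suc n) i * hh lam n (Suc j - i))
          = (\<Sum>i=1..Suc j. qq lam n i * hh lam n (Suc j - i)) + (\<Sum>i=1..Suc j. ?x ^ i * hh lam n (Suc j - i))"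
        by (simp add: qq_Suc algebra_simps sum.distrib)
      then show ?thesis using IHn[of "Suc j"] shift_sum[of lam n j] by simp
    qed
    have "(\<Sum>i=1..Suc j. qq lam (Suc n) i * hh lam (Suc n) (Suc j - i))
        = real (Suc j) * hh lam n (Suc j) + ?x * hh lam (Suc n) j + ?x * (real j * hh lam (Suc n) j)"
      using split p1 IHj by simp
    also have "\<dots> = real (Suc j) * hh lam (Suc n) (Suc j)"
      by (simp only: hh_Suc_Suc) (simp add: algebra_simps del: hh.simps)
    finally show ?case by simp
  qed
qed

lemma qq_bound:
  assumes "\<And>i. 0 \<le> lam i" "\<And>i. lam i \<le> L"
  shows "0 \<le> qq lam n i" "qq lam n i \<le> real n * L ^ i"
proof -
  show "0 \<le> qq lam n i" unfolding qq_def using assms by (auto intro: sum_nonneg)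
  have "qq lam n i \<le> (\<Sum>k<n. L ^ i)" unfolding qq_def
    using assms by (intro sum_mono power_mono) auto
  then show "qq lam n i \<le> real n * L ^ i" by simp
qed

lemma inv_pow_zero: "0 < m \<Longrightarrow> (\<lambda>n. 1 / real n ^ m) \<longlonglongrightarrow> 0"
  by (intro tendsto_divide_0[OF tendsto_const] filterlim_at_top_imp_at_infinity
      filterlim_pow_at_top filterlim_real_sequentially)

lemma hh_asym:
  assumes lam0: "\<And>i. 0 \<le> lam i" and lamL: "\<And>i. lam i \<le> L"
    and lim: "(\<lambda>n. qq lam n 1 / real n) \<longlonglongrightarrow> lb"
  shows "(\<lambda>n. fact j * hh lam n j / real n ^ j) \<longlonglongrightarrow> lb ^ j"
proof (induction j rule: less_induct)
  case (less j)
  show ?case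
  proof (cases j)
    case 0 then show ?thesis by (simp add: hh_0)
  next
    case (Suc j')
    define g where "g m n = fact m * hh lam n m / real n ^ m" for m n
    define c where "c i = (fact j' / fact (Suc j' - i) :: real)" for i
    define t where "t i n = c i * (qq lam n i / real n) * g (Suc j' - i) n * (1 / real n ^ (i - 1))" for i n
    have gl: "g (Suc j' - i) \<longlonglongrightarrow> lb ^ (Suc j' - i)" if "1 \<le> i" for i
      unfolding g_def using less[of "Suc j' - i"] that Suc by auto
    have eq: "fact j * hh lam n j / real n ^ j = (\<Sum>i=1..Suc j'. t i n)" if n: "n > 0" for n
    proof -
      have "fact j * hh lam n j = fact j' * (real (Suc j') * hh lam n (Suc j'))"
        using Suc by (simp add: algebra_simps)
      also have "\<dots> = (\<Sum>i=1..Suc j'. fact j' * qq lam n i * hh lam n (Suc j' - i))"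
        by (simp only: newton sum_distrib_left mult.assoc)
      finally have e: "fact j * hh lam n j = (\<Sum>i=1..Suc j'. fact j' * qq lam n i * hh lam n (Suc j' - i))" .
      have "fact j * hh lam n j / real n ^ j = (\<Sum>i=1..Suc j'. fact j' * qq lam n i * hh lam n (Suc j' - i)) / real n ^ Suc j'"
        using Suc e by (metis)
      also have "\<dots> = (\<Sum>i=1..Suc j'. fact j' * qq lam n i * hh lam n (Suc j' - i) / real n ^ Suc j')"
        by (rule sum_divide_distrib)
      also have "\<dots> = (\<Sum>i=1..Suc j'. t i n)"
      proof (rule sum.cong)
        fix i assume i: "i \<in> {1..Suc j'}"
        have pw: "real n ^ Suc j' = real n * real n ^ (Suc j' - i) * real n ^ (i - 1)"
        proof -
          have "Suc j' = 1 + (Suc j' - i) + (i - 1)" using i by auto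
          then have "real n ^ Suc j' = real n ^ (1 + (Suc j' - i) + (i - 1))" by simp
          then show ?thesis by (simp only: power_add) simp
        qed
        show "fact j' * qq lam n i * hh lam n (Suc j' - i) / real n ^ Suc j' = t i n"
          unfolding t_def c_def g_def pw using n by (simp add: field_simps)
      qed simp
      finally show ?thesis .
    qed
    have tl: "t i \<longlonglongrightarrow> (if i = 1 then lb ^ Suc j' else 0)" if i: "i \<in> {1..Suc j'}" for i
    proof (cases "i = 1")
      case True
      have "t i = (\<lambda>n. (qq lam n 1 / real n) * g j' n)"
        unfolding t_def c_def True by (rule ext) simp
      moreover have "(\<lambda>n. (qq lam n 1 / real n) * g j' n) \<longlonglongrightarrow> lb * lb ^ j'"
        using gl[of 1] by (intro tendsto_mult lim) simp
      ultimately show ?thesis using True by simp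
    next
      case False
      then have i2: "i - 1 > 0" using i by auto
      have bnd: "norm (t i n) \<le> c i * L ^ i * \<bar>g (Suc j' - i) n\<bar> * (1 / real n ^ (i - 1))" for n
      proof (cases "n = 0")
        case True
        have "(0::real) ^ (i - Suc 0) = 0" using i2 by simp
        then show ?thesis using True i2 by (simp add: t_def power_0_left)
      next
        case False
        have c0: "c i \<ge> 0" by (simp add: c_def)
        have qb: "0 \<le> qq lam n i" "qq lam n i \<le> real n * L ^ i"
          by (rule qq_bound[OF lam0 lamL])+
        have "\<bar>qq lam n i / real n\<bar> \<le> L ^ i"
          using qb False by (simp add: field_simps)
        then have h1: "\<bar>c i\<bar> * \<bar>qq lam n i / real n\<bar> \<le> c i * L ^ i"
          using c0 mult_left_mono[of "\<bar>qq lam n i / real n\<bar>" "L ^ i" "c i"] by simp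
        have "norm (t i n) = \<bar>c i\<bar> * \<bar>qq lam n i / real n\<bar> * \<bar>g (Suc j' - i) n\<bar> * \<bar>1 / real n ^ (i - 1)\<bar>"
          by (simp only: t_def real_norm_def abs_mult)
        also have "\<dots> \<le> c i * L ^ i * \<bar>g (Suc j' - i) n\<bar> * \<bar>1 / real n ^ (i - 1)\<bar>"
          by (intro mult_right_mono h1) auto
        finally show ?thesis by simp
      qed
      have i1: "1 \<le> i" using i by auto
      have "(\<lambda>n. c i * L ^ i * \<bar>g (Suc j' - i) n\<bar> * (1 / real n ^ (i - 1))) \<longlonglongrightarrow> c i * L ^ i * \<bar>lb ^ (Suc j' - i)\<bar> * 0"
        by (rule tendsto_mult[OF tendsto_mult[OF tendsto_const tendsto_rabs[OF gl[OF i1]]] inv_pow_zero[OF i2]])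
      then have lim0: "(\<lambda>n. c i * L ^ i * \<bar>g (Suc j' - i) n\<bar> * (1 / real n ^ (i - 1))) \<longlonglongrightarrow> 0"
        by simp
      have "t i \<longlonglongrightarrow> 0"
        by (rule Lim_null_comparison[OF always_eventually[OF allI[OF bnd]] lim0])
      then show ?thesis using False by simp
    qed
    have "(\<lambda>n. \<Sum>i=1..Suc j'. t i n) \<longlonglongrightarrow> (\<Sum>i=1..Suc j'. (if i = 1 then lb ^ Suc j' else 0))"
      by (rule tendsto_sum) (use tl in auto)
    also have "(\<Sum>i=1..Suc j'. (if i = 1 then lb ^ Suc j' else (0::real))) = lb ^ j"
      using Suc by (simp add: sum.delta)
    finally show ?thesis
      by (rule Lim_transform_eventually) (use eq in \<open>auto simp: eventually_sequentially intro!: exI[of _ 1]\<close>)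
  qed
qed

lemma cumulant_Suc: "cumulant m (Suc j) = m (Suc j) - (\<Sum>i\<in>{1..<Suc j}. real (j choose (i - 1)) * cumulant m i * m (Suc j - i))"
  by (subst cumulant.simps) simp

lemma cumulant_asym:
  assumes lim: "\<And>j. (\<lambda>n. m n (Suc j) / real n ^ j) \<longlonglongrightarrow> c (Suc j)"
  shows "(\<lambda>n. cumulant (m n) (Suc j) / real n ^ j) \<longlonglongrightarrow> c (Suc j)"
proof (induction j rule: less_induct)
  case (less j)
  define t where "t i n = real (j choose (i - 1)) * (cumulant (m n) i / real n ^ (i - 1))
      * (m n (Suc j - i) / real n ^ (j - i)) * (1 / real n)" for i n
  have eq: "cumulant (m n) (Suc j) / real n ^ j = m n (Suc j) / real n ^ j - (\<Sum>i\<in>{1..<Suc j}. t i n)"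
    if n: "n > 0" for n
  proof -
    have "cumulant (m n) (Suc j) / real n ^ j = m n (Suc j) / real n ^ j -
       (\<Sum>i\<in>{1..<Suc j}. real (j choose (i - 1)) * cumulant (m n) i * m n (Suc j - i) / real n ^ j)"
      by (simp only: cumulant_Suc diff_divide_distrib sum_divide_distrib)
    also have "(\<Sum>i\<in>{1..<Suc j}. real (j choose (i - 1)) * cumulant (m n) i * m n (Suc j - i) / real n ^ j)
        = (\<Sum>i\<in>{1..<Suc j}. t i n)"
    proof (rule sum.cong)
      fix i assume i: "i \<in> {1..<Suc j}"
      have pw: "real n ^ j = real n ^ (i - 1) * real n ^ (j - i) * real n"
      proof -
        have "j = (i - 1) + (j - i) + 1" using i by auto
        then have "real n ^ j = real n ^ ((i - 1) + (j - i) + 1)" by simp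
        then show ?thesis by (simp only: power_add) simp
      qed
      show "real (j choose (i - 1)) * cumulant (m n) i * m n (Suc j - i) / real n ^ j = t i n"
        unfolding t_def pw using n by (simp add: field_simps)
    qed simp
    finally show ?thesis .
  qed
  have tl: "t i \<longlonglongrightarrow> 0" if i: "i \<in> {1..<Suc j}" for i
  proof -
    obtain i' where i': "i = Suc i'" "i' < j" using i by (cases i) auto
    have l1: "(\<lambda>n. cumulant (m n) i / real n ^ (i - 1)) \<longlonglongrightarrow> c i"
      using less[OF i'(2)] i' by simp
    have e2: "Suc j - i = Suc (j - i)" using i by auto
    have l2: "(\<lambda>n. m n (Suc j - i) / real n ^ (j - i)) \<longlonglongrightarrow> c (Suc j - i)"
      unfolding e2 by (rule lim)
    have "t i \<longlonglongrightarrow> real (j choose (i - 1)) * c i * c (Suc j - i) * 0"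
      unfolding t_def
      by (rule tendsto_mult[OF tendsto_mult[OF tendsto_mult[OF tendsto_const l1] l2] inv_pow_zero[of 1, simplified]])
    then show ?thesis by simp
  qed
  have "(\<lambda>n. m n (Suc j) / real n ^ j - (\<Sum>i\<in>{1..<Suc j}. t i n)) \<longlonglongrightarrow> c (Suc j) - (\<Sum>i\<in>{1..<Suc j}. 0)"
    by (intro tendsto_diff lim tendsto_sum tl)
  then have "(\<lambda>n. m n (Suc j) / real n ^ j - (\<Sum>i\<in>{1..<Suc j}. t i n)) \<longlonglongrightarrow> c (Suc j)" by simp
  then show ?case
    by (rule Lim_transform_eventually) (use eq in \<open>auto simp: eventually_sequentially intro!: exI[of _ 1]\<close>)
qed

lemma cumulant_cong: "(\<And>i. 1 \<le> i \<Longrightarrow> i \<le> N \<Longrightarrow> m i = m' i) \<Longrightarrow> cumulant m N = cumulant m' N"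
proof (induction N rule: less_induct)
  case (less N)
  show ?case
  proof (cases N)
    case 0 then show ?thesis by (simp add: cumulant.simps)
  next
    case (Suc j)
    have "(\<Sum>i\<in>{1..<Suc j}. real (j choose (i - 1)) * cumulant m i * m (Suc j - i)) =
          (\<Sum>i\<in>{1..<Suc j}. real (j choose (i - 1)) * cumulant m' i * m' (Suc j - i))"
    proof (rule sum.cong)
      fix i assume i: "i \<in> {1..<Suc j}"
      have "cumulant m i = cumulant m' i" using less.IH[of i] less.prems i Suc by auto
      moreover have "m (Suc j - i) = m' (Suc j - i)" using less.prems i Suc by auto
      ultimately show "real (j choose (i - 1)) * cumulant m i * m (Suc j - i) = real (j choose (i - 1)) * cumulant m' i * m' (Suc j - i)"
        by simp
    qed simp
    moreover have "m (Suc j) = m' (Suc j)" using less.prems Suc by auto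
    ultimately show ?thesis using Suc by (simp only: cumulant_Suc)
  qed
qed



definition cb :: "nat \<Rightarrow> real" where "cb k = fact (2 * k) / (fact k)\<^sup>2"

lemma gchoose_half: "a = -1/2 \<Longrightarrow> ((a :: real) gchoose k) = (-1/4) ^ k * cb k"
proof (induction k)
  case 0 then show ?case by (simp add: cb_def)
next
  case (Suc k)
  have f2: "fact (2 * Suc k) = fact (2 * k) * (2 * real k + 1) * (2 * real k + 2)"
    by (simp add: algebra_simps)
  have "(a gchoose Suc k) = (a gchoose k) * ((a - of_nat k) / (of_nat k + 1))"
    by (rule gbinomial_Suc_rec)
  also have "\<dots> = (-1/4) ^ k * cb k * ((-1/2 - real k) / (real k + 1))"
    using Suc by simp
  also have "\<dots> = (-1/4) ^ Suc k * cb (Suc k)"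
  proof -
    have cs: "cb (Suc k) = cb k * ((2 * real k + 1) * (2 * real k + 2) / (real k + 1)\<^sup>2)"
      unfolding cb_def f2 by (simp add: field_simps power2_eq_square)
    have r: "(-1/2 - real k) / (real k + 1) = (-1/4) * ((2 * real k + 1) * (2 * real k + 2) / (real k + 1)\<^sup>2)"
    proof -
      have k0: "real k + 1 \<noteq> 0" by simp
      have "(2 * real k + 1) * (2 * real k + 2) = (2 * (2 * real k + 1)) * (real k + 1)" by (simp add: algebra_simps)
      then have e: "(2 * real k + 1) * (2 * real k + 2) / (real k + 1)\<^sup>2 = 2 * (2 * real k + 1) / (real k + 1)"
        using k0 by (simp add: power2_eq_square)
      have "(-1/2 - real k) / (real k + 1) = (-1/4) * (2 * (2 * real k + 1) / (real k + 1))"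
        by (simp add: field_simps)
      then show ?thesis unfolding e .
    qed
    show ?thesis unfolding cs r by (simp add: mult_ac)
  qed
  finally show ?case .
qed

lemma gchoose_minus1: "((-1 :: real) gchoose k) = (-1) ^ k"
proof (induction k)
  case (Suc k)
  then show ?case by (simp add: gbinomial_Suc_rec field_simps)
qed simp

lemma cb_sum: "(\<Sum>k=0..m. cb k * cb (m - k)) = 4 ^ m"
proof -
  define a :: real where "a = -1/2"
  have "(\<Sum>k=0..m. (a gchoose k) * (a gchoose (m - k))) = (a + a gchoose m)"
    by (rule gbinomial_Vandermonde)
  also have "a + a = -1" by (simp add: a_def)
  also have "(-1 gchoose m) = (-1::real) ^ m" by (rule gchoose_minus1)
  finally have "(\<Sum>k=0..m. (-1/4) ^ k * cb k * ((-1/4) ^ (m - k) * cb (m - k))) = (-1::real) ^ m"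
    using gchoose_half[OF a_def] by simp
  moreover have "(\<Sum>k=0..m. (-1/4) ^ k * cb k * ((-1/4) ^ (m - k) * cb (m - k))) = (-1/4::real) ^ m * (\<Sum>k=0..m. cb k * cb (m - k))"
    unfolding sum_distrib_left
  proof (rule sum.cong)
    fix k assume "k \<in> {0..m}"
    then have "(-1/4::real) ^ k * (-1/4) ^ (m - k) = (-1/4) ^ m" by (simp add: power_add[symmetric])
    then show "(-1/4) ^ k * cb k * ((-1/4) ^ (m - k) * cb (m - k)) = (-1/4::real) ^ m * (cb k * cb (m - k))"
      by (metis (no_types, lifting) mult.assoc mult.left_commute)
  qed simp
  ultimately have "(-1/4::real) ^ m * (\<Sum>k=0..m. cb k * cb (m - k)) = (-1) ^ m" by simp
  then have "(\<Sum>k=0..m. cb k * cb (m - k)) = (-1) ^ m / (-1/4) ^ m" by (simp add: field_simps)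
  also have "\<dots> = 4 ^ m" by (simp add: power_divide[symmetric])
  finally show ?thesis .
qed

definition dd :: "nat \<Rightarrow> real" where "dd j = fact (2 * j) / (2 ^ j * fact j)"

lemma dd_pos: "dd j > 0" by (simp add: dd_def)

lemma nn_integral_sum_cmult:
  assumes "finite I" "\<And>i. i \<in> I \<Longrightarrow> c i \<ge> 0" "\<And>i. i \<in> I \<Longrightarrow> f i \<in> borel_measurable M"
    "\<And>i x. i \<in> I \<Longrightarrow> f i x \<ge> 0"
  shows "(\<integral>\<^sup>+x. ennreal (\<Sum>i\<in>I. c i * f i x) \<partial>M) = (\<Sum>i\<in>I. ennreal (c i) * (\<integral>\<^sup>+x. ennreal (f i x) \<partial>M))"
proof -
  have "(\<integral>\<^sup>+x. ennreal (\<Sum>i\<in>I. c i * f i x) \<partial>M) = (\<integral>\<^sup>+x. (\<Sum>i\<in>I. ennreal (c i) * ennreal (f i x)) \<partial>M)"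
    using assms by (intro nn_integral_cong) (simp add: sum_ennreal[symmetric] ennreal_mult)
  also have "\<dots> = (\<Sum>i\<in>I. (\<integral>\<^sup>+x. ennreal (c i) * ennreal (f i x) \<partial>M))"
    using assms by (intro nn_integral_sum) auto
  also have "\<dots> = (\<Sum>i\<in>I. ennreal (c i) * (\<integral>\<^sup>+x. ennreal (f i x) \<partial>M))"
    using assms by (intro sum.cong refl nn_integral_cmult) auto
  finally show ?thesis .
qed

lemma std_moment_nn: "(\<integral>\<^sup>+x. ennreal (x ^ (2 * k)) \<partial>std_normal_distribution) = ennreal (dd k)"
proof -
  have "(\<integral>\<^sup>+x. ennreal (x ^ (2 * k)) \<partial>std_normal_distribution) = (LINT x|std_normal_distribution. x ^ (2 * k))"
    by (rule nn_integral_eq_integral[OF std_normal_distribution_even_moments(2)]) (auto simp: power_mult)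
  then show ?thesis by (simp add: std_normal_distribution_even_moments(1) dd_def)
qed

lemma dd_prod: "real (m choose i) / 2 ^ m * dd (m - i) * dd i = fact m * cb i * cb (m - i) / 4 ^ m"
  if "i \<le> m"
proof -
  have c: "real (m choose i) = fact m / (fact i * fact (m - i))" using that by (rule binomial_fact)
  have p: "(2::real) ^ m = 2 ^ i * 2 ^ (m - i)" using that by (simp add: power_add[symmetric])
  have p4: "(4::real) ^ m = 2 ^ m * 2 ^ m" by (simp add: power_mult_distrib[symmetric])
  have "2 * (m - i) = 2 * m - 2 * i" by simp
  show ?thesis unfolding c dd_def cb_def p4 using that
    by (simp add: field_simps power2_eq_square p)
qed

lemma exp_moment: "(\<integral>\<^sup>+a. (\<integral>\<^sup>+b. ennreal (((a\<^sup>2 + b\<^sup>2) / 2) ^ m) \<partial>std_normal_distribution) \<partial>std_normal_distribution) = ennreal (fact m)"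
proof -
  let ?N = std_normal_distribution
  have sN: "sets ?N = sets borel" by simp
  have mpow[measurable]: "(\<lambda>x::real. x ^ k) \<in> borel_measurable ?N" for k
    by (simp add: measurable_cong_sets[OF sN refl])
  have expand: "((a\<^sup>2 + b\<^sup>2) / 2) ^ m = (\<Sum>i\<le>m. (real (m choose i) / 2 ^ m * a ^ (2 * i)) * b ^ (2 * (m - i)))" for a b :: real
  proof -
    have "(a\<^sup>2 + b\<^sup>2) ^ m = (\<Sum>i\<le>m. of_nat (m choose i) * (a\<^sup>2) ^ i * (b\<^sup>2) ^ (m - i))"
      by (rule binomial_ring)
    also have "\<dots> = (\<Sum>i\<le>m. real (m choose i) * a ^ (2 * i) * b ^ (2 * (m - i)))"
      by (simp only: power_mult of_nat_id)
    finally show ?thesis by (simp add: power_divide sum_divide_distrib mult_ac)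
  qed
  have inner: "(\<integral>\<^sup>+b. ennreal (((a\<^sup>2 + b\<^sup>2) / 2) ^ m) \<partial>?N) = ennreal (\<Sum>i\<le>m. (real (m choose i) / 2 ^ m * dd (m - i)) * a ^ (2 * i))" for a :: real
  proof -
    have "(\<integral>\<^sup>+b. ennreal (((a\<^sup>2 + b\<^sup>2) / 2) ^ m) \<partial>?N) = (\<Sum>i\<le>m. ennreal (real (m choose i) / 2 ^ m * a ^ (2 * i)) * (\<integral>\<^sup>+b. ennreal (b ^ (2 * (m - i))) \<partial>?N))"
      unfolding expand by (rule nn_integral_sum_cmult) (auto simp: power_mult)
    also have "\<dots> = (\<Sum>i\<le>m. ennreal ((real (m choose i) / 2 ^ m * dd (m - i)) * a ^ (2 * i)))"
      by (intro sum.cong refl, subst std_moment_nn) (simp add: ennreal_mult[symmetric] power_mult dd_pos less_imp_le mult_ac)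
    also have "\<dots> = ennreal (\<Sum>i\<le>m. (real (m choose i) / 2 ^ m * dd (m - i)) * a ^ (2 * i))"
      by (rule sum_ennreal) (simp add: power_mult dd_pos less_imp_le)
    finally show ?thesis .
  qed
  have "(\<integral>\<^sup>+a. (\<integral>\<^sup>+b. ennreal (((a\<^sup>2 + b\<^sup>2) / 2) ^ m) \<partial>?N) \<partial>?N) = (\<Sum>i\<le>m. ennreal (real (m choose i) / 2 ^ m * dd (m - i)) * (\<integral>\<^sup>+a. ennreal (a ^ (2 * i)) \<partial>?N))"
    unfolding inner by (rule nn_integral_sum_cmult) (auto simp: power_mult dd_pos less_imp_le)
  also have "\<dots> = (\<Sum>i\<le>m. ennreal (real (m choose i) / 2 ^ m * dd (m - i) * dd i))"
    by (intro sum.cong refl, subst std_moment_nn) (simp add: ennreal_mult[symmetric] dd_pos less_imp_le)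
  also have "\<dots> = ennreal (\<Sum>i\<le>m. real (m choose i) / 2 ^ m * dd (m - i) * dd i)"
    by (rule sum_ennreal) (simp add: dd_pos less_imp_le)
  also have "(\<Sum>i\<le>m. real (m choose i) / 2 ^ m * dd (m - i) * dd i) = (\<Sum>i\<le>m. fact m / 4 ^ m * (cb i * cb (m - i)))"
  proof (rule sum.cong)
    fix i assume "i \<in> {..m}"
    then have "i \<le> m" by simp
    from dd_prod[OF this] show "real (m choose i) / 2 ^ m * dd (m - i) * dd i = fact m / 4 ^ m * (cb i * cb (m - i))"
      by simp
  qed simp
  also have "\<dots> = fact m / 4 ^ m * (\<Sum>i=0..m. cb i * cb (m - i))"
    by (simp add: sum_distrib_left atMost_atLeast0)
  also have "\<dots> = fact m" by (simp add: cb_sum)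
  finally show ?thesis .
qed




lemma gauss_moment:
  assumes P: "prob_space P" and Z[measurable]: "Z \<in> borel_measurable P" and s: "s \<ge> 0"
    and ch: "\<And>t. (CLINT x|P. iexp (t * Z x)) = complex_of_real (exp (- (t\<^sup>2 * s) / 2))"
  shows "(\<integral>\<^sup>+x. ennreal (Z x ^ (2 * j)) \<partial>P) = ennreal (s ^ j * dd j)"
proof -
  interpret P: prob_space P by (rule P)
  define N where "N = std_normal_distribution"
  have RN: "real_distribution N" unfolding N_def by (rule real_dist_normal_dist)
  interpret N: real_distribution N by (rule RN)
  have sN[simp]: "sets N = sets borel" unfolding N_def by simp
  have msc[measurable]: "(\<lambda>z. sqrt s * z) \<in> borel_measurable N"
    by (simp add: measurable_cong_sets[OF sN refl])
  define D1 where "D1 = distr P borel Z"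
  define D2 where "D2 = distr N borel (\<lambda>z. sqrt s * z)"
  have R1: "real_distribution D1" unfolding D1_def by (rule P.real_distribution_distr) simp
  have R2: "real_distribution D2" unfolding D2_def by (rule N.real_distribution_distr) simp
  have "char D1 = char D2"
  proof
    fix t
    have "char D1 t = (CLINT x|P. iexp (t * Z x))"
      unfolding char_def D1_def by (subst integral_distr) auto
    also have "\<dots> = complex_of_real (exp (- (t\<^sup>2 * s) / 2))" by (rule ch)
    also have "\<dots> = char N (t * sqrt s)"
      unfolding N_def char_std_normal_distribution using s by (simp add: power_mult_distrib)
    also have "char N (t * sqrt s) = char D2 t"
      unfolding char_def D2_def by (subst integral_distr) (auto simp: mult_ac)
    finally show "char D1 t = char D2 t" .
  qed
  then have D: "D1 = D2" by (rule Levy_uniqueness[OF R1 R2])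
  have "(\<integral>\<^sup>+x. ennreal (Z x ^ (2 * j)) \<partial>P) = (\<integral>\<^sup>+x. ennreal (x ^ (2 * j)) \<partial>D1)"
    unfolding D1_def by (subst nn_integral_distr) auto
  also have "\<dots> = (\<integral>\<^sup>+x. ennreal (x ^ (2 * j)) \<partial>D2)" by (simp add: D)
  also have "\<dots> = (\<integral>\<^sup>+z. ennreal ((sqrt s * z) ^ (2 * j)) \<partial>N)"
    unfolding D2_def by (subst nn_integral_distr) auto
  also have "\<dots> = (\<integral>\<^sup>+z. ennreal (s ^ j * z ^ (2 * j)) \<partial>N)"
    using s by (simp add: power_mult_distrib power_mult real_sqrt_pow2)
  also have "\<dots> = ennreal (s ^ j * dd j)"
  proof -
    have int: "integrable N (\<lambda>z. s ^ j * z ^ (2 * j))"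
      unfolding N_def using std_normal_distribution_even_moments(2)[of j] by simp
    have "(\<integral>\<^sup>+z. ennreal (s ^ j * z ^ (2 * j)) \<partial>N) = (LINT z|N. s ^ j * z ^ (2 * j))"
      by (rule nn_integral_eq_integral[OF int]) (use s in \<open>auto simp: power_mult\<close>)
    also have "\<dots> = s ^ j * dd j"
      unfolding N_def dd_def using std_normal_distribution_even_moments(1)[of j] by simp
    finally show ?thesis .
  qed
  finally show ?thesis .
qed




definition SQ :: "(nat \<Rightarrow> real) \<Rightarrow> (nat \<times> bool) set \<Rightarrow> ((nat \<times> bool) \<Rightarrow> real) \<Rightarrow> real" where
  "SQ lam J z = (\<Sum>i\<in>J. lam (fst i) * (z i)\<^sup>2 / 2)"

definition II :: "nat \<Rightarrow> (nat \<times> bool) set" where "II n = {..<n} \<times> UNIV"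

lemma II_Suc: "II (Suc n) = insert (n, True) (insert (n, False) (II n))"
  unfolding II_def by (auto simp: lessThan_Suc)

lemma finite_II[simp]: "finite (II n)" unfolding II_def by simp

lemma SQ_insert: "finite J \<Longrightarrow> i \<notin> J \<Longrightarrow> SQ lam (insert i J) z = lam (fst i) * (z i)\<^sup>2 / 2 + SQ lam J z"
  unfolding SQ_def by simp

lemma SQ_upd: "i \<notin> J \<Longrightarrow> SQ lam J (z(i := y)) = SQ lam J z"
  unfolding SQ_def by (intro sum.cong) auto

lemma SQ_nonneg: "(\<And>i. 0 \<le> lam i) \<Longrightarrow> 0 \<le> SQ lam J z"
  unfolding SQ_def by (intro sum_nonneg) auto

abbreviation "NN \<equiv> std_normal_distribution"

lemma sets_NN[simp]: "sets NN = sets borel" by simp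

lemma SQ_meas[measurable]: "J \<subseteq> K \<Longrightarrow> SQ lam J \<in> borel_measurable (PiM K (\<lambda>_. NN))"
  unfolding SQ_def
proof (intro borel_measurable_sum)
  fix i assume "J \<subseteq> K" "i \<in> J"
  then have "(\<lambda>z. z i) \<in> measurable (PiM K (\<lambda>_. NN)) NN" by (intro measurable_component_singleton) auto
  then have "(\<lambda>z. z i) \<in> borel_measurable (PiM K (\<lambda>_. NN))" by (simp add: measurable_cong_sets[OF refl sets_NN])
  then show "(\<lambda>x. lam (fst i) * (x i)\<^sup>2 / 2) \<in> borel_measurable (PiM K (\<lambda>_. NN))" by measurable
qed

lemma PS_NN: "product_sigma_finite (\<lambda>_. NN)"
  unfolding product_sigma_finite_def
  using real_dist_normal_dist by (auto intro: prob_space_imp_sigma_finite simp: real_distribution_def)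

lemma hh_nonneg: "(\<And>i. 0 \<le> lam i) \<Longrightarrow> 0 \<le> hh lam n j"
  by (induction n arbitrary: j) (auto intro!: sum_nonneg)

lemma sf_NN: "sigma_finite_measure NN"
  using real_dist_normal_dist by (auto intro: prob_space_imp_sigma_finite simp: real_distribution_def)

lemma meas_inner_exp[measurable]: "(\<lambda>a. \<integral>\<^sup>+b. ennreal (((a\<^sup>2 + b\<^sup>2) / 2) ^ m) \<partial>NN) \<in> borel_measurable borel"
proof -
  have "(\<lambda>(a, b). ennreal (((a\<^sup>2 + b\<^sup>2) / 2) ^ m)) \<in> borel_measurable (borel \<Otimes>\<^sub>M NN)"
    by (simp add: measurable_cong_sets[OF sets_pair_measure_cong[OF refl sets_NN] refl])
  then show ?thesis by (rule sigma_finite_measure.borel_measurable_nn_integral[OF sf_NN])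
qed

lemma sum_rev_atMost: "(\<Sum>i\<le>(j::nat). f i) = (\<Sum>i\<le>j. f (j - i))"
  by (rule sum.reindex_bij_witness[of _ "\<lambda>i. j - i" "\<lambda>i. j - i"]) auto

lemma G_moment:
  assumes lam0: "\<And>i. 0 \<le> lam i"
  shows "(\<integral>\<^sup>+z. ennreal (SQ lam (II n) z ^ j) \<partial>PiM (II n) (\<lambda>_. NN)) = ennreal (fact j * hh lam n j)"
proof (induction n arbitrary: j)
  case 0
  have "II 0 = {}" by (simp add: II_def)
  then show ?case by (simp add: SQ_def PiM_empty nn_integral_count_space_finite)
next
  case (Suc n)
  let ?I = "II n" and ?F = "(n, False)" and ?T = "(n, True)"
  let ?P = "\<lambda>J. PiM J (\<lambda>_. NN)"
  have nF: "?F \<notin> ?I" "?T \<notin> ?I" by (auto simp: II_def)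
  have nT: "?T \<notin> insert ?F ?I" using nF by auto
  define x0 where "x0 = lam n"
  have x00: "x0 \<ge> 0" using lam0 by (simp add: x0_def)
  define K where "K i = real (j choose i) * x0 ^ (j - i) * (fact i * hh lam n i)" for i
  have K0: "K i \<ge> 0" for i
  proof -
    have "hh lam n i \<ge> 0" using lam0 by (induction n arbitrary: i) (auto intro!: sum_nonneg)
    then show ?thesis using x00 by (simp add: K_def)
  qed
  have inner: "(\<integral>\<^sup>+x. ennreal ((SQ lam ?I x + x0 * e) ^ j) \<partial>?P ?I) = ennreal (\<Sum>i\<le>j. K i * e ^ (j - i))"
    if e: "e \<ge> 0" for e
  proof -
    have "(\<integral>\<^sup>+x. ennreal ((SQ lam ?I x + x0 * e) ^ j) \<partial>?P ?I)
        = (\<integral>\<^sup>+x. ennreal (\<Sum>i\<le>j. (real (j choose i) * (x0 * e) ^ (j - i)) * SQ lam ?I x ^ i) \<partial>?P ?I)"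
      by (simp add: binomial_ring mult_ac)
    also have "\<dots> = (\<Sum>i\<le>j. ennreal (real (j choose i) * (x0 * e) ^ (j - i)) * (\<integral>\<^sup>+x. ennreal (SQ lam ?I x ^ i) \<partial>?P ?I))"
      by (rule nn_integral_sum_cmult) (use e x00 SQ_nonneg[OF lam0] in auto)
    also have "\<dots> = (\<Sum>i\<le>j. ennreal (K i * e ^ (j - i)))"
      unfolding Suc.IH using e x00
      by (intro sum.cong refl, subst ennreal_mult'[symmetric])
         (auto intro!: mult_nonneg_nonneg hh_nonneg lam0 simp: K_def power_mult_distrib mult_ac)
    also have "\<dots> = ennreal (\<Sum>i\<le>j. K i * e ^ (j - i))"
      by (rule sum_ennreal) (use e K0 in auto)
    finally show ?thesis .
  qed
  have "(\<integral>\<^sup>+z. ennreal (SQ lam (II (Suc n)) z ^ j) \<partial>?P (II (Suc n)))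
     = (\<integral>\<^sup>+z. ennreal (SQ lam (insert ?T (insert ?F ?I)) z ^ j) \<partial>?P (insert ?T (insert ?F ?I)))"
    by (simp only: II_Suc)
  also have "\<dots> = (\<integral>\<^sup>+a. (\<integral>\<^sup>+x. ennreal (SQ lam (insert ?T (insert ?F ?I)) (x(?T := a)) ^ j) \<partial>?P (insert ?F ?I)) \<partial>NN)"
    by (rule product_sigma_finite.product_nn_integral_insert_rev[OF PS_NN]) (use nT in auto)
  also have "\<dots> = (\<integral>\<^sup>+a. (\<integral>\<^sup>+x. ennreal ((SQ lam (insert ?F ?I) x + x0 * (a\<^sup>2 / 2)) ^ j) \<partial>?P (insert ?F ?I)) \<partial>NN)"
    by (intro nn_integral_cong) (simp add: SQ_insert[OF _ nT] SQ_upd[OF nT] x0_def add.commute)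
  also have "\<dots> = (\<integral>\<^sup>+a. (\<integral>\<^sup>+b. (\<integral>\<^sup>+x. ennreal ((SQ lam (insert ?F ?I) (x(?F := b)) + x0 * (a\<^sup>2 / 2)) ^ j) \<partial>?P ?I) \<partial>NN) \<partial>NN)"
    by (intro nn_integral_cong product_sigma_finite.product_nn_integral_insert_rev[OF PS_NN]) (use nF in auto)
  also have "\<dots> = (\<integral>\<^sup>+a. (\<integral>\<^sup>+b. (\<integral>\<^sup>+x. ennreal ((SQ lam ?I x + x0 * ((a\<^sup>2 + b\<^sup>2) / 2)) ^ j) \<partial>?P ?I) \<partial>NN) \<partial>NN)"
    by (intro nn_integral_cong) (simp add: SQ_insert[OF _ nF(1)] SQ_upd[OF nF(1)] x0_def algebra_simps add_divide_distrib)
  also have "\<dots> = (\<integral>\<^sup>+a. (\<integral>\<^sup>+b. ennreal (\<Sum>i\<le>j. K i * ((a\<^sup>2 + b\<^sup>2) / 2) ^ (j - i)) \<partial>NN) \<partial>NN)"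
    by (intro nn_integral_cong inner) auto
  also have "\<dots> = (\<integral>\<^sup>+a. (\<Sum>i\<le>j. ennreal (K i) * (\<integral>\<^sup>+b. ennreal (((a\<^sup>2 + b\<^sup>2) / 2) ^ (j - i)) \<partial>NN)) \<partial>NN)"
    by (intro nn_integral_cong nn_integral_sum_cmult) (auto simp: K0)
  also have "\<dots> = (\<Sum>i\<le>j. ennreal (K i) * (\<integral>\<^sup>+a. (\<integral>\<^sup>+b. ennreal (((a\<^sup>2 + b\<^sup>2) / 2) ^ (j - i)) \<partial>NN) \<partial>NN))"
  proof -
    have "(\<integral>\<^sup>+a. (\<Sum>i\<le>j. ennreal (K i) * (\<integral>\<^sup>+b. ennreal (((a\<^sup>2 + b\<^sup>2) / 2) ^ (j - i)) \<partial>NN)) \<partial>NN)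
      = (\<Sum>i\<le>j. (\<integral>\<^sup>+a. ennreal (K i) * (\<integral>\<^sup>+b. ennreal (((a\<^sup>2 + b\<^sup>2) / 2) ^ (j - i)) \<partial>NN) \<partial>NN))"
      by (rule nn_integral_sum) measurable
    also have "\<dots> = (\<Sum>i\<le>j. ennreal (K i) * (\<integral>\<^sup>+a. (\<integral>\<^sup>+b. ennreal (((a\<^sup>2 + b\<^sup>2) / 2) ^ (j - i)) \<partial>NN) \<partial>NN))"
      by (intro sum.cong refl nn_integral_cmult) measurable
    finally show ?thesis .
  qed
  also have "\<dots> = (\<Sum>i\<le>j. ennreal (K i * fact (j - i)))"
    by (simp add: exp_moment ennreal_mult K0)
  also have "\<dots> = ennreal (\<Sum>i\<le>j. K i * fact (j - i))"
    by (rule sum_ennreal) (simp add: K0)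
  also have "(\<Sum>i\<le>j. K i * fact (j - i)) = fact j * hh lam (Suc n) j"
  proof -
    have "(\<Sum>i\<le>j. K i * fact (j - i)) = (\<Sum>i\<le>j. fact j * (hh lam n i * x0 ^ (j - i)))"
    proof (rule sum.cong)
      fix i assume "i \<in> {..j}"
      then have "real (j choose i) * fact i * fact (j - i) = fact j"
        by (simp add: binomial_fact)
      then show "K i * fact (j - i) = fact j * (hh lam n i * x0 ^ (j - i))"
        unfolding K_def by (metis (no_types, lifting) mult.assoc mult.commute)
    qed simp
    also have "\<dots> = fact j * (\<Sum>i\<le>j. hh lam n i * x0 ^ (j - i))"
      by (simp add: sum_distrib_left)
    also have "(\<Sum>i\<le>j. hh lam n i * x0 ^ (j - i)) = (\<Sum>i\<le>j. hh lam n (j - i) * x0 ^ (j - (j - i)))"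
      by (rule sum_rev_atMost)
    also have "\<dots> = (\<Sum>i\<le>j. hh lam n (j - i) * x0 ^ i)"
      by (intro sum.cong) auto
    also have "\<dots> = hh lam (Suc n) j"
      by (simp add: x0_def)
    finally show ?thesis .
  qed
  finally show ?case .
qed




definition cc :: "(nat \<Rightarrow> complex) \<Rightarrow> nat \<times> bool \<Rightarrow> real" where
  "cc u i = (if snd i then Re (u (fst i)) else Im (u (fst i)))"

definition YY :: "nat \<Rightarrow> (nat \<Rightarrow> complex) \<Rightarrow> (nat \<times> bool \<Rightarrow> real) \<Rightarrow> real" where
  "YY n u z = (\<Sum>i\<in>II n. z i * cc u i)"

lemma sum_II: "(\<Sum>i\<in>II n. g i) = (\<Sum>k<n. g (k, True) + g (k, False))"
proof -
  have "(\<Sum>i\<in>II n. g i) = (\<Sum>k<n. \<Sum>b\<in>UNIV. g (k, b))"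
    unfolding II_def using sum.cartesian_product[of "\<lambda>k b. g (k, b)" UNIV "{..<n}"] by simp
  then show ?thesis by (simp add: UNIV_bool add.commute)
qed

lemma char_G: "(CLINT z|PiM (II n) (\<lambda>_. NN). iexp (t * YY n u z)) = complex_of_real (exp (- (t\<^sup>2 * sqn n u) / 2))"
proof -
  interpret PS: product_sigma_finite "\<lambda>_. NN" by (rule PS_NN)
  have RN: "real_distribution NN" by (rule real_dist_normal_dist)
  interpret N: real_distribution NN by (rule RN)
  have e: "iexp (t * YY n u z) = (\<Prod>i\<in>II n. iexp (t * cc u i * z i))" for z
  proof -
    have "t * YY n u z = (\<Sum>i\<in>II n. t * cc u i * z i)"
      unfolding YY_def sum_distrib_left by (simp only: mult_ac)
    then have "\<i> * complex_of_real (t * YY n u z) = (\<Sum>i\<in>II n. \<i> * complex_of_real (t * cc u i * z i))"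
      by (simp only: of_real_sum sum_distrib_left)
    then show ?thesis by (simp only: exp_sum[symmetric] finite_II)
  qed
  have "(CLINT z|PiM (II n) (\<lambda>_. NN). iexp (t * YY n u z)) = (CLINT z|PiM (II n) (\<lambda>_. NN). (\<Prod>i\<in>II n. iexp (t * cc u i * z i)))"
    by (rule Bochner_Integration.integral_cong[OF refl e])
  also have "\<dots> = (\<Prod>i\<in>II n. CLINT y|NN. iexp (t * cc u i * y))"
  proof (rule PS.product_integral_prod)
    fix i
    show "integrable NN (\<lambda>y. iexp (t * cc u i * y))"
      by (rule N.integrable_iexp) (auto simp: measurable_cong_sets[OF sets_NN refl])
  qed simp
  also have "\<dots> = (\<Prod>i\<in>II n. complex_of_real (exp (- (t * cc u i)\<^sup>2 / 2)))"
  proof (rule prod.cong[OF refl])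
    fix i
    have "char NN (t * cc u i) = complex_of_real (exp (- (t * cc u i)\<^sup>2 / 2))"
      by (simp only: char_std_normal_distribution)
    then show "(CLINT y|NN. iexp (t * cc u i * y)) = complex_of_real (exp (- (t * cc u i)\<^sup>2 / 2))"
      unfolding char_def .
  qed
  also have "\<dots> = complex_of_real (exp (\<Sum>i\<in>II n. - (t * cc u i)\<^sup>2 / 2))"
    by (simp add: exp_sum)
  also have "(\<Sum>i\<in>II n. - (t * cc u i)\<^sup>2 / 2) = - (t\<^sup>2 * sqn n u) / 2"
  proof -
    have "(\<Sum>i\<in>II n. - (t * cc u i)\<^sup>2 / 2) = - (t\<^sup>2 * (\<Sum>i\<in>II n. (cc u i)\<^sup>2)) / 2"
      by (simp add: power_mult_distrib sum_distrib_left sum_divide_distrib sum_negf)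
    also have "(\<Sum>i\<in>II n. (cc u i)\<^sup>2) = sqn n u"
      unfolding sum_II sqn_def by (intro sum.cong) (auto simp: cc_def cmod_power2)
    finally show ?thesis .
  qed
  finally show ?thesis .
qed

lemma char_M:
  assumes cg: "complex_gaussian_diag M n lam vv"
  shows "(CLINT x|M. iexp (t * YY n (vv x) z)) = complex_of_real (exp (- (t\<^sup>2 * SQ lam (II n) z) / 2))"
proof -
  define w where "w k = complex_of_real t * Complex (z (k, True)) (z (k, False))" for k
  have h: "integral\<^sup>L M (\<lambda>x. exp (\<i> * complex_of_real (Re (\<Sum>k<n. cnj (w k) * vv x k))))
        = exp (- complex_of_real ((\<Sum>k<n. lam k * (cmod (w k))\<^sup>2) / 4))"
    using cg unfolding complex_gaussian_diag_def by blast
  have re: "Re (\<Sum>k<n. cnj (w k) * vv x k) = t * YY n (vv x) z" for x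
    unfolding YY_def sum_II Re_sum w_def cc_def
    by (simp add: sum_distrib_left algebra_simps)
  have q: "(\<Sum>k<n. lam k * (cmod (w k))\<^sup>2) / 4 = t\<^sup>2 * SQ lam (II n) z / 2"
    unfolding SQ_def sum_II w_def
    by (simp add: norm_mult cmod_power2 power_mult_distrib sum_distrib_left sum_divide_distrib algebra_simps add_divide_distrib)
  show ?thesis using h unfolding re q by (simp add: of_real_exp)
qed

lemma prob_NN: "prob_space NN"
  using real_dist_normal_dist by (simp add: real_distribution_def)

lemma comp_meas_G: "i \<in> II n \<Longrightarrow> (\<lambda>z. z i) \<in> borel_measurable (PiM (II n) (\<lambda>_. NN))"
proof -
  assume "i \<in> II n"
  then have "(\<lambda>z. z i) \<in> measurable (PiM (II n) (\<lambda>_. NN)) NN" by (intro measurable_component_singleton)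
  then show ?thesis by (simp add: measurable_cong_sets[OF refl sets_NN])
qed

lemma S_moment:
  assumes P: "prob_space M" and cg: "complex_gaussian_diag M n lam vv" and lam0: "\<And>i. 0 \<le> lam i"
  shows "integrable M (\<lambda>x. sqn n (vv x) ^ j) \<and> (\<integral>x. sqn n (vv x) ^ j \<partial>M) = fact j * hh lam n j"
proof -
  interpret P: prob_space M by (rule P)
  define G where "G = PiM (II n) (\<lambda>_. NN)"
  have PG: "prob_space G" unfolding G_def by (rule prob_space_PiM) (use prob_NN in auto)
  interpret G: prob_space G by (rule PG)
  interpret PSF: pair_sigma_finite M G by (intro pair_sigma_finite.intro) unfold_locales
  have vm: "\<And>k. k < n \<Longrightarrow> (\<lambda>x. vv x k) \<in> borel_measurable M"
    using cg unfolding complex_gaussian_diag_def by blast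
  have ccm: "(\<lambda>x. cc (vv x) i) \<in> borel_measurable M" if "i \<in> II n" for i
  proof -
    have "fst i < n" using that by (auto simp: II_def)
    then have [measurable]: "(\<lambda>x. vv x (fst i)) \<in> borel_measurable M" by (rule vm)
    show ?thesis unfolding cc_def by measurable
  qed
  have Sm: "(\<lambda>x. sqn n (vv x)) \<in> borel_measurable M"
    unfolding sqn_def by (intro borel_measurable_sum) (use vm in measurable)
  have YG: "YY n u \<in> borel_measurable G" for u
    unfolding YY_def G_def by (intro borel_measurable_sum borel_measurable_times comp_meas_G) auto
  have YM: "(\<lambda>x. YY n (vv x) z) \<in> borel_measurable M" for z
    unfolding YY_def by (intro borel_measurable_sum borel_measurable_times ccm) auto
  have Ypair: "(\<lambda>p. YY n (vv (fst p)) (snd p)) \<in> borel_measurable (M \<Otimes>\<^sub>M G)"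
    unfolding YY_def
  proof (intro borel_measurable_sum borel_measurable_times)
    fix i assume i: "i \<in> II n"
    show "(\<lambda>p. snd p i) \<in> borel_measurable (M \<Otimes>\<^sub>M G)"
      by (rule measurable_compose[OF measurable_snd]) (unfold G_def, rule comp_meas_G[OF i])
    show "(\<lambda>p. cc (vv (fst p)) i) \<in> borel_measurable (M \<Otimes>\<^sub>M G)"
      by (rule measurable_compose[OF measurable_fst ccm[OF i]])
  qed
  have i2: "(\<integral>\<^sup>+z. ennreal (YY n (vv x) z ^ (2 * j)) \<partial>G) = ennreal (sqn n (vv x) ^ j * dd j)" for x
    by (rule gauss_moment[OF PG YG sqn_nonneg]) (unfold G_def, rule char_G)
  have i1: "(\<integral>\<^sup>+x. ennreal (YY n (vv x) z ^ (2 * j)) \<partial>M) = ennreal (SQ lam (II n) z ^ j * dd j)" for z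
    by (rule gauss_moment[OF P YM SQ_nonneg[OF lam0]]) (rule char_M[OF cg])
  have "(\<integral>\<^sup>+x. ennreal (sqn n (vv x) ^ j * dd j) \<partial>M) = (\<integral>\<^sup>+x. (\<integral>\<^sup>+z. ennreal (YY n (vv x) z ^ (2 * j)) \<partial>G) \<partial>M)"
    by (simp add: i2)
  also have "\<dots> = (\<integral>\<^sup>+z. (\<integral>\<^sup>+x. ennreal (YY n (vv x) z ^ (2 * j)) \<partial>M) \<partial>G)"
    by (rule PSF.Fubini'[symmetric]) (use Ypair in \<open>simp add: case_prod_beta'\<close>)
  also have "\<dots> = (\<integral>\<^sup>+z. ennreal (dd j) * ennreal (SQ lam (II n) z ^ j) \<partial>G)"
    by (intro nn_integral_cong, subst i1) (simp add: ennreal_mult' dd_pos less_imp_le mult.commute)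
  also have "\<dots> = ennreal (dd j) * (\<integral>\<^sup>+z. ennreal (SQ lam (II n) z ^ j) \<partial>G)"
    by (rule nn_integral_cmult) (unfold G_def, measurable)
  also have "\<dots> = ennreal (dd j * (fact j * hh lam n j))"
    unfolding G_def G_moment[OF lam0] by (simp add: ennreal_mult' dd_pos less_imp_le)
  finally have nn: "(\<integral>\<^sup>+x. ennreal (sqn n (vv x) ^ j * dd j) \<partial>M) = ennreal (dd j * (fact j * hh lam n j))" .
  have mm: "(\<lambda>x. sqn n (vv x) ^ j * dd j) \<in> borel_measurable M" using Sm by measurable
  have nonneg: "AE x in M. 0 \<le> sqn n (vv x) ^ j * dd j"
    by (simp add: sqn_nonneg dd_pos less_imp_le)
  have int1: "integrable M (\<lambda>x. sqn n (vv x) ^ j * dd j)"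
    by (rule integrableI_nn_integral_finite[OF mm nonneg nn])
  have val1: "(\<integral>x. sqn n (vv x) ^ j * dd j \<partial>M) = dd j * (fact j * hh lam n j)"
  proof -
    have hn: "0 \<le> hh lam n j" by (rule hh_nonneg[OF lam0])
    show ?thesis using integral_eq_nn_integral[OF mm nonneg] nn dd_pos[of j] hn by simp
  qed
  have eqf: "(\<lambda>x. sqn n (vv x) ^ j) = (\<lambda>x. (sqn n (vv x) ^ j * dd j) / dd j)"
    using dd_pos[of j] by auto
  show ?thesis
  proof
    show "integrable M (\<lambda>x. sqn n (vv x) ^ j)"
      unfolding eqf by (rule integrable_divide[OF int1])
    show "(\<integral>x. sqn n (vv x) ^ j \<partial>M) = fact j * hh lam n j"
      unfolding eqf using val1 dd_pos[of j] by simp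
  qed
qed




lemma indep_nn:
  fixes vv :: "'a \<Rightarrow> nat \<Rightarrow> complex"
  assumes P: "prob_space M" and vm: "\<And>k. k < n \<Longrightarrow> (\<lambda>x. vv x k) \<in> borel_measurable M"
    and Um: "U \<in> measurable M (count_space UNIV)" and c0: "c \<ge> 0"
    and hyp: "\<And>B. B \<in> sets (PiM {..<n} (\<lambda>_. borel)) \<Longrightarrow>
       measure M {x \<in> space M. U x = j \<and> restrict (vv x) {..<n} \<in> B} = c * measure M {x \<in> space M. restrict (vv x) {..<n} \<in> B}"
  shows "(\<integral>\<^sup>+x. indicator {x. U x = j} x * ennreal (sqn n (vv x) ^ m) \<partial>M) = ennreal c * (\<integral>\<^sup>+x. ennreal (sqn n (vv x) ^ m) \<partial>M)"
proof -
  interpret P: prob_space M by (rule P)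
  define PM where "PM = (PiM {..<n} (\<lambda>_. borel) :: (nat \<Rightarrow> complex) measure)"
  define V where "V x = restrict (vv x) {..<n}" for x
  define g where "g f = (\<Sum>k<n. (cmod (f k))\<^sup>2)" for f :: "nat \<Rightarrow> complex"
  define E where "E = {x \<in> space M. U x = j}"
  have Vm: "V \<in> measurable M PM"
    unfolding V_def PM_def by (rule measurable_restrict) (use vm in auto)
  have gm: "g \<in> borel_measurable PM"
    unfolding g_def PM_def
  proof (intro borel_measurable_sum)
    fix k :: nat assume "k \<in> {..<n}"
    then have "(\<lambda>f. f k) \<in> measurable (PiM {..<n} (\<lambda>_. borel)) (borel :: complex measure)"
      by (intro measurable_component_singleton) auto
    then show "(\<lambda>f. (cmod (f k))\<^sup>2) \<in> borel_measurable (PiM {..<n} (\<lambda>_. borel))" by measurable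
  qed
  have gV: "g (V x) = sqn n (vv x)" for x
    unfolding g_def V_def sqn_def by (intro sum.cong) auto
  have Em: "E \<in> sets M"
  proof -
    have "E = U -` {j} \<inter> space M" by (auto simp: E_def)
    then show ?thesis using Um by (auto intro: measurable_sets)
  qed
  define M1 where "M1 = density M (indicator E)"
  have indm[measurable]: "(indicator E :: 'a \<Rightarrow> ennreal) \<in> borel_measurable M"
    using Em by (rule borel_measurable_indicator)
  have sM1: "sets M1 = sets M" by (simp add: M1_def)
  have Vm1: "V \<in> measurable M1 PM" using Vm by (simp add: measurable_cong_sets[OF sM1 refl])
  have eqm: "distr M1 PM V = density (distr M PM V) (\<lambda>_. ennreal c)"
  proof (rule measure_eqI)
    show "sets (distr M1 PM V) = sets (density (distr M PM V) (\<lambda>_. ennreal c))" by simp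
  next
    fix B assume "B \<in> sets (distr M1 PM V)"
    then have B: "B \<in> sets PM" by simp
    have s1: "V -` B \<inter> space M \<in> sets M" using Vm B by (rule measurable_sets)
    have "emeasure (distr M1 PM V) B = emeasure M1 (V -` B \<inter> space M1)"
      by (rule emeasure_distr[OF Vm1 B])
    also have "\<dots> = emeasure M1 (V -` B \<inter> space M)" by (simp add: M1_def)
    also have "\<dots> = (\<integral>\<^sup>+x. indicator E x * indicator (V -` B \<inter> space M) x \<partial>M)"
      unfolding M1_def by (subst emeasure_density) (auto simp: s1 Em mult.commute)
    also have "\<dots> = (\<integral>\<^sup>+x. indicator (E \<inter> (V -` B \<inter> space M)) x \<partial>M)"
      by (intro nn_integral_cong) (simp add: indicator_inter_arith)
    also have "\<dots> = emeasure M (E \<inter> (V -` B \<inter> space M))"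
      using Em s1 by (intro nn_integral_indicator) auto
    also have "E \<inter> (V -` B \<inter> space M) = {x \<in> space M. U x = j \<and> restrict (vv x) {..<n} \<in> B}"
      by (auto simp: E_def V_def)
    also have "emeasure M {x \<in> space M. U x = j \<and> restrict (vv x) {..<n} \<in> B} = ennreal (measure M {x \<in> space M. U x = j \<and> restrict (vv x) {..<n} \<in> B})"
      by (rule P.emeasure_eq_measure)
    also have "\<dots> = ennreal (c * measure M {x \<in> space M. restrict (vv x) {..<n} \<in> B})"
      using hyp B by (simp add: PM_def)
    also have "\<dots> = ennreal c * emeasure M (V -` B \<inter> space M)"
    proof -
      have "V -` B \<inter> space M = {x \<in> space M. restrict (vv x) {..<n} \<in> B}" by (auto simp: V_def)
      then show ?thesis using c0 by (simp add: ennreal_mult P.emeasure_eq_measure)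
    qed
    also have "\<dots> = ennreal c * emeasure (distr M PM V) B"
      by (simp add: emeasure_distr[OF Vm B])
    also have "\<dots> = emeasure (density (distr M PM V) (\<lambda>_. ennreal c)) B"
    proof -
      have "emeasure (density (distr M PM V) (\<lambda>_. ennreal c)) B = (\<integral>\<^sup>+y. ennreal c * indicator B y \<partial>distr M PM V)"
        using B by (subst emeasure_density) auto
      also have "\<dots> = ennreal c * emeasure (distr M PM V) B"
        using B by (subst nn_integral_cmult_indicator) auto
      finally show ?thesis by simp
    qed
    finally show "emeasure (distr M1 PM V) B = emeasure (density (distr M PM V) (\<lambda>_. ennreal c)) B" .
  qed
  have "(\<integral>\<^sup>+x. indicator {x. U x = j} x * ennreal (sqn n (vv x) ^ m) \<partial>M) = (\<integral>\<^sup>+x. indicator E x * ennreal (g (V x) ^ m) \<partial>M)"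
    by (intro nn_integral_cong) (auto simp: E_def gV indicator_def)
  also have "\<dots> = (\<integral>\<^sup>+x. ennreal (g (V x) ^ m) \<partial>M1)"
    unfolding M1_def using Vm gm Em by (subst nn_integral_density) auto
  also have "\<dots> = (\<integral>\<^sup>+y. ennreal (g y ^ m) \<partial>distr M1 PM V)"
    using Vm1 gm by (subst nn_integral_distr) auto
  also have "\<dots> = (\<integral>\<^sup>+y. ennreal c * ennreal (g y ^ m) \<partial>distr M PM V)"
    unfolding eqm using gm by (subst nn_integral_density) auto
  also have "\<dots> = ennreal c * (\<integral>\<^sup>+y. ennreal (g y ^ m) \<partial>distr M PM V)"
    using gm by (subst nn_integral_cmult) auto
  also have "(\<integral>\<^sup>+y. ennreal (g y ^ m) \<partial>distr M PM V) = (\<integral>\<^sup>+x. ennreal (sqn n (vv x) ^ m) \<partial>M)"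
    using Vm gm by (subst nn_integral_distr) (auto simp: gV)
  finally show ?thesis .
qed

lemma omega_meas:
  assumes Sm: "S \<in> borel_measurable M" and Um: "U \<in> measurable M (count_space UNIV)"
  shows "(\<lambda>x. (replicate (n - 1) 0 @ [S x :: real]) ! U x) \<in> borel_measurable M"
proof (rule measurable_compose_countable[OF _ Um])
  fix i
  show "(\<lambda>x. (replicate (n - 1) 0 @ [S x]) ! i) \<in> borel_measurable M"
  proof (cases "i < n - 1")
    case True then show ?thesis by (simp add: nth_append)
  next
    case False
    show ?thesis
    proof (cases "i = n - 1")
      case True then show ?thesis using Sm by (simp add: nth_append)
    next
      case False2: False
      then obtain k where k: "i - (n - 1) = Suc k" using False by (cases "i - (n - 1)") auto
      then show ?thesis using False by (simp add: nth_append)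
    qed
  qed
qed

lemma moments_eq:
  fixes M :: "'a measure" and lam :: "nat \<Rightarrow> real" and vv :: "'a \<Rightarrow> nat \<Rightarrow> complex" and U :: "'a \<Rightarrow> nat"
  assumes P: "prob_space M" and lam0: "\<And>i. 0 \<le> lam i" and n1: "n \<ge> 1" and j1: "j \<ge> 1"
    and cg: "complex_gaussian_diag M n lam vv"
    and Um: "U \<in> measurable M (count_space UNIV)"
    and Up: "\<And>i. i < n \<Longrightarrow> measure M {x \<in> space M. U x = i} = 1 / real n"
    and ind: "\<And>i B. B \<in> sets (PiM {..<n} (\<lambda>_. borel)) \<Longrightarrow>
           measure M {x \<in> space M. U x = i \<and> restrict (vv x) {..<n} \<in> B}
           = measure M {x \<in> space M. U x = i} * measure M {x \<in> space M. restrict (vv x) {..<n} \<in> B}"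
  shows "moments M (\<lambda>x. eigenvalue_list n (vv x) ! U x) j = fact j * hh lam n j / real n"
proof -
  interpret P: prob_space M by (rule P)
  define S where "S x = sqn n (vv x)" for x
  have vm: "\<And>k. k < n \<Longrightarrow> (\<lambda>x. vv x k) \<in> borel_measurable M"
    using cg unfolding complex_gaussian_diag_def by blast
  have Sm: "S \<in> borel_measurable M"
    unfolding S_def sqn_def by (intro borel_measurable_sum) (use vm in measurable)
  have Smom: "integrable M (\<lambda>x. S x ^ j) \<and> (\<integral>x. S x ^ j \<partial>M) = fact j * hh lam n j"
    unfolding S_def by (rule S_moment[OF P cg lam0])
  have ev: "eigenvalue_list n (vv x) = replicate (n - 1) 0 @ [S x]" for x
    unfolding S_def by (rule eigenvalue_list_rank_one[OF n1])
  have Usets: "{x \<in> space M. U x = i} \<in> sets M" for i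
  proof -
    have "{x \<in> space M. U x = i} = U -` {i} \<inter> space M" by auto
    then show ?thesis using Um by (auto intro: measurable_sets)
  qed
  have "measure M (\<Union>i\<in>{..<n}. {x \<in> space M. U x = i}) = (\<Sum>i\<in>{..<n}. measure M {x \<in> space M. U x = i})"
    by (rule P.finite_measure_finite_Union) (auto simp: Usets disjoint_family_on_def)
  also have "\<dots> = 1" using Up n1 by simp
  finally have "measure M (\<Union>i\<in>{..<n}. {x \<in> space M. U x = i}) = 1" .
  then have AEU: "AE x in M. x \<in> (\<Union>i\<in>{..<n}. {x \<in> space M. U x = i})"
    by (rule P.AE_prob_1)
  have AEeq: "AE x in M. (eigenvalue_list n (vv x) ! U x) ^ j = indicator {x. U x = n - 1} x * S x ^ j"
    using AEU
  proof (rule AE_mp, intro AE_I2 impI)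
    fix x assume "x \<in> (\<Union>i\<in>{..<n}. {x \<in> space M. U x = i})"
    then have Ux: "U x < n" by auto
    show "(eigenvalue_list n (vv x) ! U x) ^ j = indicator {x. U x = n - 1} x * S x ^ j"
    proof (cases "U x = n - 1")
      case True then show ?thesis unfolding ev by (simp add: nth_append)
    next
      case False
      then have "U x < n - 1" using Ux by auto
      then show ?thesis unfolding ev using False j1 by (simp add: nth_append)
    qed
  qed
  have om: "(\<lambda>x. (eigenvalue_list n (vv x) ! U x) ^ j) \<in> borel_measurable M"
    unfolding ev using omega_meas[OF Sm Um] by measurable
  have indUm: "(\<lambda>x. indicator {x. U x = n - 1} x * S x ^ j :: real) \<in> borel_measurable M"
  proof -
    have "(\<lambda>x. indicator {x. U x = n - 1} x :: real) = (\<lambda>x. if U x = n - 1 then 1 else 0)"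
      by (auto simp: indicator_def)
    moreover have "(\<lambda>x. if U x = n - 1 then 1 else 0 :: real) \<in> borel_measurable M"
      by (rule measurable_compose_countable[OF _ Um, of "\<lambda>i x. if i = n - 1 then 1 else 0"]) simp
    ultimately show ?thesis using Sm by simp
  qed
  have "moments M (\<lambda>x. eigenvalue_list n (vv x) ! U x) j = (\<integral>x. indicator {x. U x = n - 1} x * S x ^ j \<partial>M)"
    unfolding moments_def by (rule integral_cong_AE[OF om indUm AEeq])
  also have "\<dots> = enn2real (\<integral>\<^sup>+x. ennreal (indicator {x. U x = n - 1} x * S x ^ j) \<partial>M)"
    by (rule integral_eq_nn_integral[OF indUm]) (simp add: S_def sqn_nonneg)
  also have "(\<integral>\<^sup>+x. ennreal (indicator {x. U x = n - 1} x * S x ^ j) \<partial>M) = (\<integral>\<^sup>+x. indicator {x. U x = n - 1} x * ennreal (sqn n (vv x) ^ j) \<partial>M)"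
    by (intro nn_integral_cong) (simp add: S_def indicator_def)
  also have "\<dots> = ennreal (1 / real n) * (\<integral>\<^sup>+x. ennreal (sqn n (vv x) ^ j) \<partial>M)"
  proof (rule indep_nn[OF P vm Um])
    fix B :: "(nat \<Rightarrow> complex) set" assume "B \<in> sets (PiM {..<n} (\<lambda>_. borel))"
    then show "measure M {x \<in> space M. U x = n - 1 \<and> restrict (vv x) {..<n} \<in> B} = 1 / real n * measure M {x \<in> space M. restrict (vv x) {..<n} \<in> B}"
      using ind Up[of "n - 1"] n1 by simp
  qed auto
  also have "(\<integral>\<^sup>+x. ennreal (sqn n (vv x) ^ j) \<partial>M) = ennreal (fact j * hh lam n j)"
    using nn_integral_eq_integral[of M "\<lambda>x. S x ^ j"] Smom by (simp add: S_def sqn_nonneg)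
  also have "enn2real (ennreal (1 / real n) * ennreal (fact j * hh lam n j)) = fact j * hh lam n j / real n"
  proof -
    have hn: "0 \<le> hh lam n j" by (rule hh_nonneg[OF lam0])
    then show ?thesis by (simp add: ennreal_mult[symmetric] enn2real_ennreal)
  qed
  finally show ?thesis .
qed

theorem theorem1:
  fixes M :: "'a measure"
    and lam :: "nat \<Rightarrow> real" and lam_max lam_bar :: real
    and v :: "nat \<Rightarrow> 'a \<Rightarrow> nat \<Rightarrow> complex"
    and U :: "nat \<Rightarrow> 'a \<Rightarrow> nat"
  assumes "prob_space M"
    and "\<And>i. 0 \<le> lam i" and "\<And>i. lam i < lam_max"
    and "(\<lambda>n. (\<Sum>i<n. lam i) / real n) \<longlonglongrightarrow> lam_bar"
    and "\<And>n. n \<ge> 1 \<Longrightarrow> complex_gaussian_diag M n lam (v n)"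
    and "\<And>n. n \<ge> 1 \<Longrightarrow> U n \<in> measurable M (count_space UNIV)"
    and "\<And>n j. n \<ge> 1 \<Longrightarrow> j < n \<Longrightarrow> measure M {x \<in> space M. U n x = j} = 1 / real n"
    and "\<And>n j B. n \<ge> 1 \<Longrightarrow> B \<in> sets (PiM {..<n} (\<lambda>_. borel)) \<Longrightarrow>
           measure M {x \<in> space M. U n x = j \<and> restrict (v n x) {..<n} \<in> B}
           = measure M {x \<in> space M. U n x = j} * measure M {x \<in> space M. restrict (v n x) {..<n} \<in> B}"
  shows "\<forall>k. (\<lambda>n. cumulant (moments M (\<lambda>x. eigenvalue_list n (v n x) ! U n x)) (Suc k)
                  / real n ^ k) \<longlonglongrightarrow> lam_bar ^ (Suc k)"
proof
  fix k
  note A = assms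
  define m' where "m' n j = fact j * hh lam n j / real n" for n j
  have mm: "moments M (\<lambda>x. eigenvalue_list n (v n x) ! U n x) j = m' n j" if "n \<ge> 1" "j \<ge> 1" for n j
    unfolding m'_def
    by (rule moments_eq[OF A(1) A(2) that A(5)[OF that(1)] A(6)[OF that(1)] A(7)[OF that(1)] A(8)[OF that(1)]])
  have lim: "(\<lambda>n. m' n (Suc j) / real n ^ j) \<longlonglongrightarrow> lam_bar ^ Suc j" for j
  proof -
    have "(\<lambda>n. fact (Suc j) * hh lam n (Suc j) / real n ^ Suc j) \<longlonglongrightarrow> lam_bar ^ Suc j"
    proof (rule hh_asym)
      show "\<And>i. 0 \<le> lam i" by (rule A(2))
      show "\<And>i. lam i \<le> lam_max" using A(3) less_imp_le by blast
      show "(\<lambda>n. qq lam n 1 / real n) \<longlonglongrightarrow> lam_bar" using A(4) by (simp add: qq_def)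
    qed
    then show ?thesis unfolding m'_def by (simp add: divide_divide_eq_left mult.commute)
  qed
  have "(\<lambda>n. cumulant (m' n) (Suc k) / real n ^ k) \<longlonglongrightarrow> lam_bar ^ Suc k"
    by (rule cumulant_asym[where c = "\<lambda>j. lam_bar ^ j"]) (rule lim)
  then show "(\<lambda>n. cumulant (moments M (\<lambda>x. eigenvalue_list n (v n x) ! U n x)) (Suc k) / real n ^ k) \<longlonglongrightarrow> lam_bar ^ Suc k"
  proof (rule Lim_transform_eventually)
    show "\<forall>\<^sub>F n in sequentially. cumulant (m' n) (Suc k) / real n ^ k = cumulant (moments M (\<lambda>x. eigenvalue_list n (v n x) ! U n x)) (Suc k) / real n ^ k"
      unfolding eventually_sequentially
    proof (intro exI[of _ 1] allI impI)
      fix n :: nat assume "1 \<le> n"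
      then have "cumulant (m' n) (Suc k) = cumulant (moments M (\<lambda>x. eigenvalue_list n (v n x) ! U n x)) (Suc k)"
        by (intro cumulant_cong) (simp add: mm)
      then show "cumulant (m' n) (Suc k) / real n ^ k = cumulant (moments M (\<lambda>x. eigenvalue_list n (v n x) ! U n x)) (Suc k) / real n ^ k"
        by simp
    qed
  qed
qed


end
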